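(* Let $\lambda\in(0,1]$ and let $F$ be a $\lambda$-regular distribution of a nonnegative random variable $X$ with finite mean $\mu>0$. Then posting the price $\mu$ satisfies \[\frac{\mathrm{OPT}(F)}{\mathrm{REV}(\mu;F)}\le(1-\lambda)^{-1/\lambda},\] where the right-hand side is interpreted as $+\infty$ for $\lambda=1$.
   Context: A continuous distribution $F$ with density $f$, supported on an interval $D_F$ of nonnegative reals, is $\lambda$-regular ($\lambda\in[0,1]$) if $\phi_\lambda(x)=\lambda x-\frac{1-F(x)}{f(x)}$ is nondecreasing on $D_F$. For a price $p\ge0$, $\mathrm{REV}(p;F)=p\Pr[X\ge p]$, and $\mathrm{OPT}(F)=\sup_{p\ge0}\mathrm{REV}(p;F)$ is the optimal revenue from selling one item to one buyer with value $X\sim F$. *)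

theory Defs
  imports "HOL-Probability.Probability"
begin

definition dist_of :: "(real \<Rightarrow> real) \<Rightarrow> real measure" where
  "dist_of f = density lborel (\<lambda>x. ennreal (f x))"

definition cdf_of :: "(real \<Rightarrow> real) \<Rightarrow> real \<Rightarrow> real" where
  "cdf_of f x = measure (dist_of f) {..x}"

definition REV :: "(real \<Rightarrow> real) \<Rightarrow> real \<Rightarrow> real" where
  "REV f p = p * measure (dist_of f) {p..}"

definition OPT :: "(real \<Rightarrow> real) \<Rightarrow> real" where
  "OPT f = (SUP p\<in>{0..}. REV f p)"

definition lambda_regular :: "real \<Rightarrow> (real \<Rightarrow> real) \<Rightarrow> real set \<Rightarrow> bool" where
  "lambda_regular lam f D = mono_on D (\<lambda>x. lam * x - (1 - cdf_of f x) / f x)"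

end

theory Submission
  imports Defs
begin

lemma mesh_mono:
  fixes g :: "real \<Rightarrow> real"
  assumes pq: "p \<le> q" and eta: "\<eta> > 0" and K: "K \<ge> 0"
    and loc: "\<And>y z. p \<le> y \<Longrightarrow> y \<le> z \<Longrightarrow> z \<le> q \<Longrightarrow> z - y \<le> \<eta> \<Longrightarrow> g y - g z \<le> K * (z-y)^2"
  shows "g p \<le> g q"
proof (rule ccontr)
  assume "\<not> g p \<le> g q"
  then have e: "g p - g q > 0" by simp
  obtain n1 :: nat where n1: "(q-p)/\<eta> < n1" using reals_Archimedean2 by blast
  obtain n2 :: nat where n2: "K*(q-p)^2/(g p - g q) < n2" using reals_Archimedean2 by blast
  define n where "n = Suc (max n1 n2)"
  have npos: "real n > 0" unfolding n_def by simp
  have nge1: "(q-p)/\<eta> < n" using n1 unfolding n_def by simp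
  have nge2: "K*(q-p)^2/(g p - g q) < n" using n2 unfolding n_def by simp
  define d where "d = (q-p)/n"
  have d0: "d \<ge> 0" unfolding d_def using pq npos by simp
  have deta: "d \<le> \<eta>"
  proof -
    have "q - p < n * \<eta>" using nge1 eta by (simp add: field_simps)
    then show ?thesis unfolding d_def using npos by (simp add: field_simps)
  qed
  have step: "\<forall>k. k \<le> n \<longrightarrow> g p - g (p + real k * d) \<le> real k * K * d^2"
  proof (intro allI)
    fix k show "k \<le> n \<longrightarrow> g p - g (p + real k * d) \<le> real k * K * d^2"
    proof (induction k)
      case 0 then show ?case by simp
    next
      case (Suc k)
      show ?case
      proof
        assume kn: "Suc k \<le> n"
        then have IH: "g p - g (p + real k * d) \<le> real k * K * d^2" using Suc by simp
        have le: "p + real (Suc k) * d \<le> q"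
        proof -
          have "real (Suc k) * d \<le> real n * d" using kn d0 by (intro mult_right_mono) auto
          also have "\<dots> = q - p" unfolding d_def using npos by simp
          finally show ?thesis by simp
        qed
        have "g (p + real k * d) - g (p + real (Suc k) * d) \<le> K * ((p + real (Suc k) * d) - (p + real k * d))^2"
          using d0 deta le by (intro loc) (auto simp: algebra_simps)
        also have "\<dots> = K * d^2" by (simp add: algebra_simps)
        finally show "g p - g (p + real (Suc k) * d) \<le> real (Suc k) * K * d^2"
          using IH by (simp add: algebra_simps)
      qed
    qed
  qed
  have "g p - g (p + real n * d) \<le> real n * K * d^2" using step by simp
  moreover have "p + real n * d = q" unfolding d_def using npos by simp
  moreover have "real n * K * d^2 = K*(q-p)^2 / n" unfolding d_def using npos by (simp add: power2_eq_square field_simps)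
  ultimately have "g p - g q \<le> K*(q-p)^2 / n" by simp
  moreover have "K*(q-p)^2 / n < g p - g q" using nge2 e npos by (simp add: field_simps)
  ultimately show False by simp
qed

lemma left_core:
  fixes S :: "real \<Rightarrow> real"
  assumes lam: "0 < lam" "lam \<le> 1" and c: "c > 0" and pm: "p \<le> m"
    and lp: "c + lam * (p - m) > 0"
    and Spos: "\<And>t. p \<le> t \<Longrightarrow> t \<le> m \<Longrightarrow> S t > 0"
    and loc: "\<And>y z. p \<le> y \<Longrightarrow> y \<le> z \<Longrightarrow> z \<le> m \<Longrightarrow> S y - S z \<le> (z-y) * S y / (c + lam * (y - m))"
  shows "lam * ln (S p) + ln (c + lam * (p - m)) \<le> lam * ln (S m) + ln c"
proof -
  define l where "l t = c + lam * (t - m)" for t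
  define L where "L = l p"
  have L: "L > 0" using lp unfolding L_def l_def by simp
  have lge: "l t \<ge> L" if "p \<le> t" for t using that lam unfolding L_def l_def by (simp add: mult_left_mono)
  define g where "g t = lam * ln (S t) + ln (l t)" for t
  have "g p \<le> g m"
  proof (rule mesh_mono[of p m "L/2" "3 / L^2"])
    show "p \<le> m" by fact
    show "L/2 > 0" using L by simp
    show "3 / L^2 \<ge> 0" by simp
    fix y z assume y: "p \<le> y" and yz: "y \<le> z" and z: "z \<le> m" and h: "z - y \<le> L/2"
    have ly: "l y \<ge> L" using lge y by simp
    have lypos: "l y > 0" using ly L by simp
    define \<delta> where "\<delta> = (z - y) / l y"
    have d0: "\<delta> \<ge> 0" unfolding \<delta>_def using yz lypos by simp
    have dle: "\<delta> \<le> 1/2"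
    proof -
      have "z - y \<le> l y / 2" using h ly by simp
      then show ?thesis unfolding \<delta>_def using lypos by (simp add: field_simps)
    qed
    have dL: "\<delta> \<le> (z-y) / L" unfolding \<delta>_def using yz L ly by (intro divide_left_mono) auto
    have Sy: "S y > 0" and Sz: "S z > 0" using Spos y yz z by auto
    have "S y - S z \<le> \<delta> * S y" using loc[OF y yz z] unfolding \<delta>_def l_def by simp
    then have Szb: "S z \<ge> S y * (1 - \<delta>)" by (simp add: algebra_simps)
    have omd: "1 - \<delta> > 0" using dle by simp
    have "ln (S z) \<ge> ln (S y * (1 - \<delta>))" using Szb Sy omd by (intro ln_mono) auto
    then have lnS: "ln (S z) \<ge> ln (S y) + ln (1 - \<delta>)" using Sy omd by (simp add: ln_mult)
    have lz: "l z = l y * (1 + lam * \<delta>)" unfolding \<delta>_def l_def using lypos unfolding l_def by (simp add: field_simps)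
    have pos1: "1 + lam * \<delta> > 0" using lam d0 by (simp add: add_pos_nonneg)
    have lnl: "ln (l z) = ln (l y) + ln (1 + lam * \<delta>)" using lz lypos pos1
      by (simp add: ln_mult)
    have b1: "ln (1 - \<delta>) \<ge> - \<delta> - 2 * \<delta>^2" using ln_one_minus_pos_lower_bound d0 dle by simp
    have ld1: "lam * \<delta> \<le> 1" using lam d0 dle using mult_mono[of lam 1 \<delta> "1/2"] by simp
    have b2: "ln (1 + lam * \<delta>) \<ge> lam * \<delta> - (lam * \<delta>)^2" using ln_one_plus_pos_lower_bound[OF _ ld1] lam d0 by simp
    have "g z - g y = lam * (ln (S z) - ln (S y)) + (ln (l z) - ln (l y))" unfolding g_def by (simp add: algebra_simps)
    also have "\<dots> \<ge> lam * ln (1 - \<delta>) + ln (1 + lam * \<delta>)"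
    proof -
      have "lam * ln (1 - \<delta>) \<le> lam * (ln (S z) - ln (S y))" using lnS lam by (intro mult_left_mono) auto
      then show ?thesis using lnl by simp
    qed
    finally have "g z - g y \<ge> lam * ln (1 - \<delta>) + ln (1 + lam * \<delta>)" .
    moreover have "lam * ln (1 - \<delta>) \<ge> lam * (- \<delta> - 2 * \<delta>^2)" using b1 lam by (intro mult_left_mono) auto
    moreover have "lam^2 * \<delta>^2 \<le> \<delta>^2" using lam by (simp add: power_le_one mult_left_le_one_le)
    moreover have "lam * \<delta>^2 \<le> \<delta>^2" using lam by (simp add: mult_left_le_one_le)
    ultimately have "g y - g z \<le> 3 * \<delta>^2" using b2 by (simp add: power_mult_distrib algebra_simps)
    also have "\<dots> \<le> 3 * ((z-y)/L)^2" using d0 dL by (intro mult_left_mono power_mono) auto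
    also have "\<dots> = 3 / L^2 * (z - y)^2" by (simp add: power_divide)
    finally show "g y - g z \<le> 3 / L^2 * (z - y)^2" .
  qed
  then show ?thesis unfolding g_def l_def by simp
qed

lemma right_core:
  fixes S :: "real \<Rightarrow> real"
  assumes lam: "0 < lam" "lam \<le> 1" and c: "c > 0" and mr: "m \<le> r"
    and Spos: "\<And>t. m \<le> t \<Longrightarrow> t \<le> r \<Longrightarrow> S t > 0"
    and loc: "\<And>y z. m \<le> y \<Longrightarrow> y \<le> z \<Longrightarrow> z \<le> r \<Longrightarrow> S y - S z \<ge> (z-y) * S z / (c + lam * (z - m))"
  shows "lam * ln (S r) + ln (c + lam * (r - m)) \<le> lam * ln (S m) + ln c"
proof -
  define l where "l t = c + lam * (t - m)" for t
  have lge: "l t \<ge> c" if "m \<le> t" for t using that lam unfolding l_def by simp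
  define g where "g t = - (lam * ln (S t) + ln (l t))" for t
  have "g m \<le> g r"
  proof (rule mesh_mono[of m r "c/2" "3 / c^2"])
    show "m \<le> r" by fact
    show "c/2 > 0" using c by simp
    show "3 / c^2 \<ge> 0" by simp
    fix y z assume y: "m \<le> y" and yz: "y \<le> z" and z: "z \<le> r" and h: "z - y \<le> c/2"
    have lz: "l z \<ge> c" using lge y yz by simp
    have lzpos: "l z > 0" using lz c by simp
    define \<delta> where "\<delta> = (z - y) / l z"
    have d0: "\<delta> \<ge> 0" unfolding \<delta>_def using yz lzpos by simp
    have dle: "\<delta> \<le> 1/2"
    proof -
      have "z - y \<le> l z / 2" using h lz by simp
      then show ?thesis unfolding \<delta>_def using lzpos by (simp add: field_simps)
    qed
    have dL: "\<delta> \<le> (z-y) / c" unfolding \<delta>_def using yz c lz by (intro divide_left_mono) auto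
    have Sy: "S y > 0" and Sz: "S z > 0" using Spos y yz z by auto
    have "S y - S z \<ge> \<delta> * S z" using loc[OF y yz z] unfolding \<delta>_def l_def by simp
    then have Szb: "S y \<ge> S z * (1 + \<delta>)" by (simp add: algebra_simps)
    have opd: "1 + \<delta> > 0" using d0 by simp
    have "ln (S y) \<ge> ln (S z * (1 + \<delta>))" using Szb Sz opd by (intro ln_mono) auto
    then have lnS: "ln (S y) \<ge> ln (S z) + ln (1 + \<delta>)" using Sz opd by (simp add: ln_mult)
    have ly: "l y = l z * (1 - lam * \<delta>)" unfolding \<delta>_def l_def using lzpos unfolding l_def by (simp add: field_simps)
    have ld: "lam * \<delta> \<le> 1/2" using lam d0 dle using mult_mono[of lam 1 \<delta> "1/2"] by simp
    have ld0: "lam * \<delta> \<ge> 0" using lam d0 by simp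
    have lnl: "ln (l y) = ln (l z) + ln (1 - lam * \<delta>)" using ly lzpos ld
      by (simp add: ln_mult)
    have b1: "ln (1 - lam * \<delta>) \<ge> - (lam * \<delta>) - 2 * (lam * \<delta>)^2" using ln_one_minus_pos_lower_bound ld0 ld by simp
    have b2: "ln (1 + \<delta>) \<ge> \<delta> - \<delta>^2" using ln_one_plus_pos_lower_bound[of \<delta>] d0 dle by simp
    have "g y - g z = lam * (ln (S z) - ln (S y)) + (ln (l z) - ln (l y))" unfolding g_def by (simp add: algebra_simps)
    also have "\<dots> \<le> - lam * ln (1 + \<delta>) - ln (1 - lam * \<delta>)"
    proof -
      have "lam * ln (1 + \<delta>) \<le> lam * (ln (S y) - ln (S z))" using lnS lam by (intro mult_left_mono) auto
      then show ?thesis using lnl by (simp add: algebra_simps)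
    qed
    finally have "g y - g z \<le> - lam * ln (1 + \<delta>) - ln (1 - lam * \<delta>)" .
    moreover have "lam * ln (1 + \<delta>) \<ge> lam * (\<delta> - \<delta>^2)" using b2 lam by (intro mult_left_mono) auto
    moreover have "lam^2 * \<delta>^2 \<le> \<delta>^2" using lam by (simp add: power_le_one mult_left_le_one_le)
    moreover have "lam * \<delta>^2 \<le> \<delta>^2" using lam by (simp add: mult_left_le_one_le)
    ultimately have "g y - g z \<le> 3 * \<delta>^2" using b1 by (simp add: power_mult_distrib algebra_simps)
    also have "\<dots> \<le> 3 * ((z-y)/c)^2" using d0 dL by (intro mult_left_mono power_mono) auto
    also have "\<dots> = 3 / c^2 * (z - y)^2" by (simp add: power_divide)
    finally show "g y - g z \<le> 3 / c^2 * (z - y)^2" .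
  qed
  then show ?thesis unfolding g_def l_def by simp
qed

lemma dist_of_sets[simp]: "sets (dist_of f) = sets borel" and dist_of_space[simp]: "space (dist_of f) = UNIV"
  unfolding dist_of_def by auto

lemma em_dens:
  assumes fm: "f \<in> borel_measurable borel" and A: "A \<in> sets borel"
  shows "emeasure (dist_of f) A = (\<integral>\<^sup>+ x. ennreal (f x) * indicator A x \<partial>lborel)"
  unfolding dist_of_def using fm A by (subst emeasure_density) auto

lemma meas_singleton:
  assumes fm: "f \<in> borel_measurable borel" and P: "prob_space (dist_of f)"
  shows "measure (dist_of f) {x} = 0"
proof -
  have "emeasure (dist_of f) {x} = (\<integral>\<^sup>+ t. ennreal (f t) * indicator {x} t \<partial>lborel)"
    using em_dens[OF fm] by simp
  also have "\<dots> = (\<integral>\<^sup>+ t. 0 \<partial>(lborel::real measure))"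
  proof (rule nn_integral_cong_AE)
    show "AE t in lborel. ennreal (f t) * indicator {x} t = 0"
      using AE_lborel_singleton[of x] by eventually_elim (auto simp: indicator_def)
  qed
  finally have "emeasure (dist_of f) {x} = 0" by simp
  then show ?thesis by (simp add: measure_def)
qed

lemma Ico_upper:
  assumes fm: "f \<in> borel_measurable borel" and P: "prob_space (dist_of f)"
    and B: "B \<ge> 0" and yz: "y \<le> z" and fb: "\<And>t. y \<le> t \<Longrightarrow> t < z \<Longrightarrow> f t \<le> B"
  shows "measure (dist_of f) {y..<z} \<le> (z - y) * B"
proof -
  interpret prob_space "dist_of f" by fact
  have "ennreal (measure (dist_of f) {y..<z}) = emeasure (dist_of f) {y..<z}"
    by (simp add: emeasure_eq_measure)
  also have "\<dots> = (\<integral>\<^sup>+ x. ennreal (f x) * indicator {y..<z} x \<partial>lborel)"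
    using em_dens[OF fm] by simp
  also have "\<dots> \<le> (\<integral>\<^sup>+ x. ennreal B * indicator {y..<z} x \<partial>lborel)"
    by (intro nn_integral_mono) (auto simp: indicator_def fb ennreal_leI)
  also have "\<dots> = ennreal B * ennreal (z - y)"
    using yz by (subst nn_integral_cmult_indicator) auto
  also have "\<dots> = ennreal ((z - y) * B)" using B yz by (simp add: ennreal_mult' mult.commute)
  finally show ?thesis using B yz by (subst (asm) ennreal_le_iff) auto
qed

lemma Ico_lower:
  assumes fm: "f \<in> borel_measurable borel" and P: "prob_space (dist_of f)"
    and B: "B \<ge> 0" and yz: "y \<le> z" and fb: "\<And>t. y \<le> t \<Longrightarrow> t < z \<Longrightarrow> B \<le> f t"
  shows "(z - y) * B \<le> measure (dist_of f) {y..<z}"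
proof -
  interpret prob_space "dist_of f" by fact
  have "ennreal ((z - y) * B) = ennreal B * ennreal (z - y)" using B yz by (simp add: ennreal_mult' mult.commute)
  also have "\<dots> = (\<integral>\<^sup>+ x. ennreal B * indicator {y..<z} x \<partial>lborel)"
    using yz by (subst nn_integral_cmult_indicator) auto
  also have "\<dots> \<le> (\<integral>\<^sup>+ x. ennreal (f x) * indicator {y..<z} x \<partial>lborel)"
    by (intro nn_integral_mono) (auto simp: indicator_def fb ennreal_leI)
  also have "\<dots> = emeasure (dist_of f) {y..<z}"
    using em_dens[OF fm] by simp
  also have "\<dots> = ennreal (measure (dist_of f) {y..<z})"
    by (simp add: emeasure_eq_measure)
  finally show ?thesis by (subst (asm) ennreal_le_iff) auto
qed

lemma S_diff:
  assumes P: "prob_space (dist_of f)" and yz: "y \<le> z"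
  shows "measure (dist_of f) {y..} - measure (dist_of f) {z..} = measure (dist_of f) {y..<z}"
proof -
  interpret prob_space "dist_of f" by fact
  have "{y..} = {y..<z} \<union> {z..}" using yz by auto
  then have "measure (dist_of f) {y..} = measure (dist_of f) {y..<z} + measure (dist_of f) {z..}"
    by (simp add: finite_measure_Union ivl_disj_int)
  then show ?thesis by simp
qed

lemma S_cdf:
  assumes fm: "f \<in> borel_measurable borel" and P: "prob_space (dist_of f)"
  shows "measure (dist_of f) {x..} = 1 - cdf_of f x"
proof -
  interpret prob_space "dist_of f" by fact
  have "measure (dist_of f) {..x} + measure (dist_of f) {x<..} = measure (dist_of f) ({..x} \<union> {x<..})"
    by (subst finite_measure_Union) auto
  also have "{..x} \<union> {x<..} = UNIV" by auto
  finally have 1: "measure (dist_of f) {..x} + measure (dist_of f) {x<..} = 1" using prob_space by simp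
  have "measure (dist_of f) {x} + measure (dist_of f) {x<..} = measure (dist_of f) ({x} \<union> {x<..})"
    by (subst finite_measure_Union) auto
  also have "{x} \<union> {x<..} = {x..}" by auto
  finally have "measure (dist_of f) {x..} = measure (dist_of f) {x} + measure (dist_of f) {x<..}" by simp
  then show ?thesis using 1 meas_singleton[OF fm P] unfolding cdf_of_def by simp
qed

lemma layer_cake:
  assumes fm: "f \<in> borel_measurable borel" and P: "prob_space (dist_of f)"
    and nn: "AE x in dist_of f. 0 \<le> x"
  shows "(\<integral>\<^sup>+ x. ennreal x \<partial>dist_of f) = (\<integral>\<^sup>+ t. ennreal (measure (dist_of f) {t..}) * indicator {0..} t \<partial>lborel)"
proof -
  let ?M = "dist_of f"
  interpret M: prob_space ?M by fact
  interpret pair_sigma_finite ?M "lborel::real measure" 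
    by (intro pair_sigma_finite.intro M.sigma_finite_measure_axioms lborel.sigma_finite_measure_axioms)
  define g where "g x t = (indicator {(x,t). 0 \<le> t \<and> t \<le> x} (x,t) :: ennreal)" for x t :: real
  have gm: "case_prod g \<in> borel_measurable (?M \<Otimes>\<^sub>M lborel)"
  proof -
    have "case_prod g \<in> borel_measurable (borel \<Otimes>\<^sub>M borel)"
      unfolding g_def by measurable
    moreover have "sets (?M \<Otimes>\<^sub>M lborel) = sets (borel \<Otimes>\<^sub>M (borel :: real measure))"
      by (intro sets_pair_measure_cong) auto
    ultimately show ?thesis by (simp add: measurable_def space_pair_measure)
  qed
  have "(\<integral>\<^sup>+ x. ennreal x \<partial>?M) = (\<integral>\<^sup>+ x. (\<integral>\<^sup>+ t. g x t \<partial>lborel) \<partial>?M)"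
  proof (rule nn_integral_cong_AE)
    show "AE x in ?M. ennreal x = (\<integral>\<^sup>+ t. g x t \<partial>lborel)"
      using nn
    proof eventually_elim
      case (elim x)
      have "(\<integral>\<^sup>+ t. g x t \<partial>lborel) = (\<integral>\<^sup>+ t. indicator {0..x} t \<partial>lborel)"
        unfolding g_def by (intro nn_integral_cong) (auto simp: indicator_def)
      also have "\<dots> = ennreal x" using elim by simp
      finally show ?case by simp
    qed
  qed
  also have "\<dots> = (\<integral>\<^sup>+ t. (\<integral>\<^sup>+ x. g x t \<partial>?M) \<partial>lborel)"
    using Fubini'[OF gm] by simp
  also have "\<dots> = (\<integral>\<^sup>+ t. ennreal (measure ?M {t..}) * indicator {0..} t \<partial>lborel)"
  proof (rule nn_integral_cong)
    fix t :: real
    have "(\<integral>\<^sup>+ x. g x t \<partial>?M) = (\<integral>\<^sup>+ x. indicator {0..} t * indicator {t..} x \<partial>?M)"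
      unfolding g_def by (intro nn_integral_cong) (auto simp: indicator_def)
    also have "\<dots> = indicator {0..} t * emeasure ?M {t..}"
      by (subst nn_integral_cmult_indicator) auto
    also have "\<dots> = ennreal (measure ?M {t..}) * indicator {0..} t"
      by (simp add: M.emeasure_eq_measure mult.commute)
    finally show "(\<integral>\<^sup>+ x. g x t \<partial>?M) = ennreal (measure ?M {t..}) * indicator {0..} t" .
  qed
  finally show ?thesis .
qed

lemma tail_int:
  fixes lam c m A x0 :: real
  assumes lam: "0 < lam" "lam < 1" and A: "A > 0" and x0: "c + lam * (x0 - m) = A"
  shows "(\<integral>\<^sup>+ t. ennreal (A powr (1/lam) * (c + lam * (t - m)) powr (-1/lam)) * indicator {x0..} t \<partial>lborel)
         = ennreal (A / (1 - lam))"
proof -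
  define l where "l t = c + lam * (t - m)" for t
  define K where "K = A powr (1/lam)"
  define F where "F t = - K / (1 - lam) * l t powr (1 - 1/lam)" for t
  have lpos: "l t > 0" if "x0 \<le> t" for t
  proof -
    have "l t = A + lam * (t - x0)" unfolding l_def using x0 by (simp add: algebra_simps)
    then show ?thesis using A lam that by (simp add: add_pos_nonneg)
  qed
  have "(\<integral>\<^sup>+ t. ennreal (K * l t powr (-1/lam)) * indicator {x0..} t \<partial>lborel) = 0 - F x0"
  proof (rule nn_integral_FTC_atLeast)
    show "(\<lambda>t. K * l t powr (-1/lam)) \<in> borel_measurable borel" unfolding l_def by measurable
    show "0 \<le> K * l t powr (-1/lam)" for t unfolding K_def by simp
    show "DERIV F t :> K * l t powr (-1/lam)" if t: "x0 \<le> t" for t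
    proof -
      have dl: "DERIV l t :> lam" unfolding l_def by (auto intro!: derivative_eq_intros)
      have dp: "DERIV (\<lambda>u. u powr (1 - 1/lam)) (l t) :> (1 - 1/lam) * l t powr (1 - 1/lam - 1)"
        using has_real_derivative_powr[OF lpos[OF t], of "1 - 1/lam"] by (simp only:)
      have "DERIV (\<lambda>u. l u powr (1 - 1/lam)) t :> (1 - 1/lam) * l t powr (1 - 1/lam - 1) * lam"
        using DERIV_chain2[OF dp dl] .
      then have "DERIV F t :> - K / (1 - lam) * ((1 - 1/lam) * l t powr (1 - 1/lam - 1) * lam)"
        unfolding F_def by (intro DERIV_cmult)
      moreover have "- K / (1 - lam) * ((1 - 1/lam) * l t powr (1 - 1/lam - 1) * lam) = K * l t powr (-1/lam)"
        using lam by (simp add: field_simps)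
      ultimately show ?thesis by simp
    qed
    show "(F \<longlongrightarrow> 0) at_top"
    proof -
      have lim: "filterlim l at_top at_top"
        unfolding l_def filterlim_at_top
      proof (intro allI)
        fix Z :: real
        show "eventually (\<lambda>t. Z \<le> c + lam * (t - m)) at_top"
          unfolding eventually_at_top_linorder
        proof (intro exI[of _ "m + (Z - c)/lam"] allI impI)
          fix t assume "m + (Z - c)/lam \<le> t"
          then have "(Z - c)/lam \<le> t - m" by simp
          then have "Z - c \<le> lam * (t - m)" using lam by (simp add: field_simps)
          then show "Z \<le> c + lam * (t - m)" by simp
        qed
      qed
      have "1 - 1/lam < 0" using lam by (simp add: field_simps)
      from tendsto_neg_powr[OF this lim] have "((\<lambda>t. l t powr (1 - 1/lam)) \<longlongrightarrow> 0) at_top" .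
      then have "((\<lambda>t. - K / (1 - lam) * l t powr (1 - 1/lam)) \<longlongrightarrow> - K / (1 - lam) * 0) at_top"
        by (intro tendsto_mult tendsto_const)
      then show ?thesis unfolding F_def by simp
    qed
  qed
  moreover have "0 - F x0 = A / (1 - lam)"
  proof -
    have "l x0 = A" unfolding l_def using x0 .
    then have "F x0 = - K / (1 - lam) * A powr (1 - 1/lam)" unfolding F_def by simp
    also have "K * A powr (1 - 1/lam) = A" unfolding K_def using A by (simp add: powr_add[symmetric])
    then have "- K / (1 - lam) * A powr (1 - 1/lam) = - A / (1 - lam)" by (simp add: field_simps)
    finally show ?thesis by simp
  qed
  ultimately show ?thesis unfolding K_def l_def by simp
qed

theorem corollary3:
  fixes lam \<mu> :: real and f :: "real \<Rightarrow> real" and D :: "real set"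
  assumes "0 < lam" and "lam \<le> 1"
    and "f \<in> borel_measurable borel" and "\<forall>x. 0 \<le> f x"
    and "prob_space (dist_of f)"
    and "is_interval D" and "D \<subseteq> {0..}"
    and "\<forall>x\<in>D. 0 < f x" and "\<forall>x. x \<notin> D \<longrightarrow> f x = 0"
    and "lambda_regular lam f D"
    and "integrable (dist_of f) (\<lambda>x. x)"
    and "\<mu> = integral\<^sup>L (dist_of f) (\<lambda>x. x)" and "0 < \<mu>"
  shows "ereal (OPT f / REV f \<mu>) \<le>
           (if lam = 1 then \<infinity> else ereal ((1 - lam) powr (- 1 / lam)))"
proof (cases "lam = 1")
  case True then show ?thesis by simp
next
  case False
  note lam0 = assms(1) and lam1' = assms(2) and fm = assms(3) and f0 = assms(4) and P = assms(5)
    and Dint = assms(6) and D0 = assms(7) and fD = assms(8) and fnD = assms(9) and reg = assms(10)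
    and intX = assms(11) and mu = assms(12) and mupos = assms(13)
  have lam1: "lam < 1" using False lam1' by simp
  define M where "M = dist_of f"
  interpret M: prob_space M unfolding M_def by (rule P)
  define m where "m = \<mu>"
  define S where "S t = measure M {t..}" for t
  have S_cdf': "S t = 1 - cdf_of f t" for t unfolding S_def M_def using S_cdf[OF fm P] .
  have Sdiff: "S y - S z = measure M {y..<z}" if "y \<le> z" for y z
    unfolding S_def M_def using S_diff[OF P that] .
  have Santi: "S z \<le> S y" if "y \<le> z" for y z using Sdiff[OF that] measure_nonneg[of M "{y..<z}"] by linarith
  have S01: "0 \<le> S t" "S t \<le> 1" for t unfolding S_def by auto
  have AED: "AE x in M. x \<in> D"
  proof -
    have "AE x in lborel. 0 < ennreal (f x) \<longrightarrow> x \<in> D" by (intro AE_I2) (use fnD in force)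
    then show ?thesis unfolding M_def dist_of_def using fm by (subst AE_density) auto
  qed
  have AE0: "AE x in M. 0 \<le> x" using AED by eventually_elim (use D0 in auto)
  have intX': "integrable M (\<lambda>x. x)" using intX unfolding M_def .
  have mint: "integral\<^sup>L M (\<lambda>x. x) = m" unfolding m_def mu M_def ..
  have notlt: "\<not> (AE x in M. x < m)"
  proof
    assume a: "AE x in M. x < m"
    have i: "integrable M (\<lambda>x. m - x)" using intX' by auto
    have "integral\<^sup>L M (\<lambda>x. m - x) = 0" using intX' mint by (simp add: M.prob_space)
    moreover have nn: "AE x in M. 0 \<le> m - x" using a by eventually_elim simp
    ultimately have "AE x in M. m - x = 0" using integral_nonneg_eq_0_iff_AE[OF i nn] by simp
    with a have "AE x in M. False" by eventually_elim simp
    then show False by simp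
  qed
  have notgt: "\<not> (AE x in M. m < x)"
  proof
    assume a: "AE x in M. m < x"
    have i: "integrable M (\<lambda>x. x - m)" using intX' by auto
    have "integral\<^sup>L M (\<lambda>x. x - m) = 0" using intX' mint by (simp add: M.prob_space)
    moreover have nn: "AE x in M. 0 \<le> x - m" using a by eventually_elim simp
    ultimately have "AE x in M. x - m = 0" using integral_nonneg_eq_0_iff_AE[OF i nn] by simp
    with a have "AE x in M. False" by eventually_elim simp
    then show False by simp
  qed
  have mD: "m \<in> D"
  proof -
    obtain d1 where d1: "d1 \<in> D" "d1 \<le> m"
    proof (rule ccontr)
      assume "\<not> thesis"
      with that have dd: "\<forall>d\<in>D. m < d" by force
      have "AE x in M. m < x" using AED by eventually_elim (use dd in auto)
      with notgt show False by simp
    qed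
    obtain d2 where d2: "d2 \<in> D" "m \<le> d2"
    proof (rule ccontr)
      assume "\<not> thesis"
      with that have dd: "\<forall>d\<in>D. d < m" by force
      have "AE x in M. x < m" using AED by eventually_elim (use dd in auto)
      with notlt show False by simp
    qed
    show ?thesis using Dint d1 d2 unfolding is_interval_1 by blast
  qed
  have spos: "S m > 0"
  proof (rule ccontr)
    assume "\<not> S m > 0"
    then have "S m = 0" using S01[of m] by simp
    then have "emeasure M {m..} = 0" unfolding S_def by (simp add: M.emeasure_eq_measure)
    then have "AE x in M. x \<notin> {m..}" by (intro AE_not_in) (auto simp: null_sets_def M_def)
    then have "AE x in M. x < m" by eventually_elim auto
    with notlt show False by simp
  qed
  define s where "s = S m"
  have fm_pos: "f m > 0" using fD mD by auto
  define c where "c = s / f m"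
  have cpos: "c > 0" unfolding c_def s_def using spos fm_pos by simp
  define l where "l t = c + lam * (t - m)" for t
  have phi: "lam * x - S x / f x \<le> lam * y - S y / f y" if "x \<in> D" "y \<in> D" "x \<le> y" for x y
    using mono_onD[OF reg[unfolded lambda_regular_def] that] unfolding S_cdf' .
  have regL: "S t \<ge> f t * l t" if "t \<in> D" "t \<le> m" for t
  proof -
    have "lam * t - S t / f t \<le> lam * m - c" using phi[OF that(1) mD that(2)] unfolding c_def s_def .
    then have "S t / f t \<ge> l t" unfolding l_def by (simp add: algebra_simps)
    then show ?thesis using fD that(1) by (simp add: field_simps)
  qed
  have regR: "S t \<le> f t * l t" if "t \<in> D" "m \<le> t" for t
  proof -
    have "lam * m - c \<le> lam * t - S t / f t" using phi[OF mD that(1) that(2)] unfolding c_def s_def .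
    then have "S t / f t \<le> l t" unfolding l_def by (simp add: algebra_simps)
    then show ?thesis using fD that(1) by (simp add: field_simps)
  qed
  have lmono: "l y \<le> l z" if "y \<le> z" for y z unfolding l_def using that lam0 by simp
  have leftT: "lam * ln (S p) + ln (l p) \<le> lam * ln s + ln c" if p: "p \<le> m" "l p > 0" for p
  proof -
    have "lam * ln (S p) + ln (c + lam * (p - m)) \<le> lam * ln (S m) + ln c"
    proof (rule left_core[OF lam0 lam1' cpos p(1)])
      show "c + lam * (p - m) > 0" using p(2) unfolding l_def .
      show "S t > 0" if "p \<le> t" "t \<le> m" for t using Santi[OF that(2)] spos by simp
      fix y z assume y: "p \<le> y" and yz: "y \<le> z" and z: "z \<le> m"
      have ly: "l y > 0" using lmono[OF y] p(2) by simp
      have "S y - S z = measure M {y..<z}" using Sdiff[OF yz] .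
      also have "\<dots> \<le> (z - y) * (S y / l y)" unfolding M_def
      proof (rule Ico_upper[OF fm P _ yz])
        show "0 \<le> S y / l y" using ly S01 by simp
        fix t assume t: "y \<le> t" "t < z"
        show "f t \<le> S y / l y"
        proof (cases "t \<in> D")
          case True
          have lt: "l t \<ge> l y" using lmono t by simp
          have "f t * l y \<le> f t * l t" using lt f0 by (simp add: mult_left_mono)
          also have "\<dots> \<le> S t" using regL[OF True] t z by simp
          also have "\<dots> \<le> S y" using Santi t by simp
          finally show ?thesis using ly by (simp add: field_simps)
        next
          case False then show ?thesis using fnD ly S01 by simp
        qed
      qed
      finally show "S y - S z \<le> (z - y) * S y / (c + lam * (y - m))" unfolding l_def by simp
    qed
    then show ?thesis unfolding l_def s_def by simp
  qed
  have rightT: "lam * ln (S r) + ln (l r) \<le> lam * ln s + ln c" if r: "m \<le> r" "S r > 0" for r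
  proof -
    have "lam * ln (S r) + ln (c + lam * (r - m)) \<le> lam * ln (S m) + ln c"
    proof (rule right_core[OF lam0 lam1' cpos r(1)])
      show "S t > 0" if "m \<le> t" "t \<le> r" for t using Santi[OF that(2)] r(2) by simp
      fix y z assume y: "m \<le> y" and yz: "y \<le> z" and z: "z \<le> r"
      have lz: "l z \<ge> c" using lmono[of m z] y yz unfolding l_def by simp
      have Sz: "S z > 0" using Santi[OF z] r(2) by simp
      have "(z - y) * (S z / l z) \<le> measure M {y..<z}" unfolding M_def
      proof (rule Ico_lower[OF fm P _ yz])
        show "0 \<le> S z / l z" using lz cpos S01 by simp
        fix t assume t: "y \<le> t" "t < z"
        have tD: "t \<in> D"
        proof (rule ccontr)
          assume tnD: "t \<notin> D"
          have dd: "\<forall>d\<in>D. d < t"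
          proof
            fix d assume d: "d \<in> D"
            show "d < t"
            proof (rule ccontr)
              assume "\<not> d < t"
              then have "t \<in> D" using Dint mD d y t unfolding is_interval_1
                by (meson linorder_not_less order_trans)
              with tnD show False by simp
            qed
          qed
          have "AE x in M. x \<notin> {z..}" using AED by eventually_elim (use dd t in force)
          then have "emeasure M {z..} = 0"
            by (subst (asm) AE_iff_measurable[of "{z..}"]) (auto simp: M_def)
          then have "S z = 0" unfolding S_def by (simp add: measure_def)
          with Sz show False by simp
        qed
        have lt: "l t \<le> l z" using lmono t by simp
        have ltpos: "l t \<ge> c" using lmono[of m t] y t unfolding l_def by simp
        have "S z / l z \<le> S t / l z" using Santi t lz cpos by (simp add: divide_right_mono)
        also have "\<dots> \<le> S t / l t" using lt ltpos cpos S01 by (intro divide_left_mono) auto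
        also have "\<dots> \<le> f t" using regR[OF tD] y t ltpos cpos by (simp add: field_simps)
        finally show "S z / l z \<le> f t" .
      qed
      then show "(z - y) * S z / (c + lam * (z - m)) \<le> S y - S z" using Sdiff[OF yz] unfolding l_def by simp
    qed
    then show ?thesis unfolding l_def s_def by simp
  qed
  define q where "q = s powr lam"
  define A where "A = q * c"
  have qpos: "q > 0" unfolding q_def using spos s_def by simp
  have Apos: "A > 0" unfolding A_def using qpos cpos by simp
  have lnA: "ln A = lam * ln s + ln c" unfolding A_def q_def using spos cpos s_def
    by (simp add: ln_mult ln_powr)
  define x0 where "x0 = m - (c - A) / lam"
  have lx0: "l x0 = A" unfolding l_def x0_def using lam0 by (simp add: field_simps)
  have tang: "lam * ln (S t) + ln (l t) \<le> ln A" if "x0 \<le> t" "S t > 0" for t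
  proof (cases "t \<le> m")
    case True
    have "l t > 0" using lmono[OF that(1)] lx0 Apos by simp
    then show ?thesis using leftT[OF True] lnA by simp
  next
    case False then show ?thesis using rightT[of t] that lnA by simp
  qed
  define G where "G t = A powr (1/lam) * l t powr (-1/lam)" for t
  have SG: "S t \<le> G t" if "x0 \<le> t" for t
  proof (cases "S t > 0")
    case False then show ?thesis using S01[of t] unfolding G_def by simp
  next
    case True
    have ltpos: "l t > 0" using lmono[OF that] lx0 Apos by simp
    have "lam * ln (S t) \<le> ln A - ln (l t)" using tang[OF that True] by simp
    then have "ln (S t) \<le> (1/lam) * ln A + (-1/lam) * ln (l t)" using lam0 by (simp add: field_simps)
    then have "exp (ln (S t)) \<le> exp ((1/lam) * ln A + (-1/lam) * ln (l t))" by simp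
    moreover have "G t = exp ((1/lam) * ln A + (-1/lam) * ln (l t))" unfolding G_def using ltpos Apos
      by (simp add: powr_def mult_exp_exp)
    ultimately show ?thesis using True by simp
  qed
  have S0: "S 0 = 1"
  proof -
    have "measure M {0..} = 1" using AE0 by (subst M.prob_eq_1) (auto simp: M_def)
    then show ?thesis unfolding S_def .
  qed
  have x0nn: "x0 \<ge> 0"
  proof (rule ccontr)
    assume "\<not> x0 \<ge> 0"
    then have "x0 < 0" by simp
    then have "l 0 > A" unfolding l_def x0_def using lam0 by (simp add: field_simps)
    moreover have "lam * ln (S 0) + ln (l 0) \<le> ln A" using tang[of 0] \<open>x0 < 0\<close> S0 by simp
    ultimately show False using Apos S0 by simp
  qed
  have "ennreal m = (\<integral>\<^sup>+ x. ennreal x \<partial>M)"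
    using nn_integral_eq_integral[OF intX' AE0] mint by simp
  also have "\<dots> = (\<integral>\<^sup>+ t. ennreal (S t) * indicator {0..} t \<partial>lborel)"
    unfolding S_def M_def using layer_cake[OF fm P] AE0 unfolding M_def by simp
  also have "\<dots> \<le> (\<integral>\<^sup>+ t. indicator {0..<x0} t + ennreal (G t) * indicator {x0..} t \<partial>lborel)"
  proof (rule nn_integral_mono)
    fix t :: real
    show "ennreal (S t) * indicator {0..} t \<le> indicator {0..<x0} t + ennreal (G t) * indicator {x0..} t"
    proof (cases "t < 0")
      case True then show ?thesis by simp
    next
      case False
      show ?thesis
      proof (cases "t < x0")
        case True then show ?thesis using False S01[of t] by (simp add: indicator_def)
      next
        case False2: False
        then show ?thesis using False SG[of t] by (simp add: indicator_def ennreal_leI)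
      qed
    qed
  qed
  also have "\<dots> = (\<integral>\<^sup>+ t. indicator {0..<x0} t \<partial>lborel) + (\<integral>\<^sup>+ t. ennreal (G t) * indicator {x0..} t \<partial>lborel)"
    unfolding G_def l_def by (subst nn_integral_add) auto
  also have "(\<integral>\<^sup>+ t. ennreal (G t) * indicator {x0..} t \<partial>lborel) = ennreal (A / (1 - lam))"
    unfolding G_def l_def using tail_int[OF lam0 lam1 Apos] lx0 unfolding l_def by simp
  also have "(\<integral>\<^sup>+ t. indicator {0..<x0} t \<partial>lborel) = ennreal x0" using x0nn by simp
  finally have "ennreal m \<le> ennreal x0 + ennreal (A / (1 - lam))" .
  then have "m \<le> x0 + A / (1 - lam)" using x0nn Apos lam1
    by (simp add: ennreal_plus[symmetric] del: ennreal_plus)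
  then have "(c - A) / lam \<le> A / (1 - lam)" unfolding x0_def by simp
  then have "(c - A) * (1 - lam) \<le> A * lam" using lam0 lam1 by (simp add: field_simps)
  then have "c * (1 - lam - q) \<le> 0" unfolding A_def by (simp add: algebra_simps)
  then have qge: "1 - lam \<le> q" using cpos by (simp add: mult_le_0_iff)
  have sq: "s = q powr (1/lam)" unfolding q_def using spos s_def lam0 by (simp add: powr_powr)
  have sge: "(1 - lam) powr (1/lam) \<le> s" unfolding sq using qge lam0 lam1 by (intro powr_mono2) auto
  have pospow: "(1 - lam) powr (1/lam) > 0" using lam1 by simp
  have REVm: "REV f \<mu> = m * s" unfolding REV_def s_def S_def M_def m_def by simp
  have OPTle: "OPT f \<le> m"
    unfolding OPT_def
  proof (rule cSUP_least)
    show "{0::real..} \<noteq> {}" by auto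
    fix p :: real assume "p \<in> {0..}"
    then have p: "p \<ge> 0" by simp
    show "REV f p \<le> m"
    proof (cases "p = 0")
      case True then show ?thesis unfolding REV_def using mupos m_def by simp
    next
      case False
      then have pp: "p > 0" using p by simp
      have "measure M {x\<in>space M. x \<ge> p} \<le> (\<integral>x. x \<partial>M) / p"
        using integral_Markov_inequality_measure[OF intX' _ AE0 pp, of UNIV] by (simp add: M_def)
      moreover have "{x\<in>space M. x \<ge> p} = {p..}" by (auto simp: M_def)
      ultimately have "measure M {p..} \<le> m / p" using mint by simp
      then have "p * measure M {p..} \<le> m" using pp by (simp add: field_simps)
      then show ?thesis unfolding REV_def M_def .
    qed
  qed
  have mpos: "m > 0" using mupos m_def by simp
  have "OPT f / REV f \<mu> \<le> m / (m * s)" unfolding REVm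
    using OPTle mpos spos s_def by (intro divide_right_mono) auto
  also have "\<dots> = 1 / s" using mpos by simp
  also have "\<dots> \<le> 1 / (1 - lam) powr (1/lam)"
  proof (rule divide_left_mono)
    show "(1 - lam) powr (1/lam) \<le> s" by (rule sge)
    show "(0::real) \<le> 1" by simp
    show "0 < s * (1 - lam) powr (1/lam)" using spos pospow unfolding s_def by (rule mult_pos_pos)
  qed
  also have "\<dots> = (1 - lam) powr (- 1 / lam)" by (simp add: powr_minus_divide)
  finally show ?thesis using False by simp
qed

end
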